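(* Let $\alpha\in(0,1)\setminus\mathbb{Q}$. There is $\beta_0>0$ such that for every irrational $\beta\in(0,\beta_0)$ the following holds for the maps $T_1,T_2$ of the circle $\mathbb{S}=\mathbb{R}/\mathbb{Z}$ defined below: for every arc $K\subset\mathbb{S}$ of positive length there is a finite word $j_1,\dots,j_k\in\{1,2\}$ such that $(T_{j_1}\circ\dots\circ T_{j_k})(\mathbb{S})\subset K$.
   Context: $\mathbb{S}=\mathbb{R}/\mathbb{Z}$, with points represented by $y\in[0,1)$. Let $\delta=1-\alpha$. $T_1(y)=y+\alpha \bmod 1$. $T_2$ is the double rotation $T_2(y)=y+\alpha+\beta\bmod 1$ if $y\le\delta$, and $T_2(y)=y+\alpha\bmod1$ if $y>\delta$. *)

theory Defs
  imports Complex_Main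
begin

text \<open>The circle R/Z is represented by points y in [0,1); reduction mod 1 is frac.\<close>

definition circle :: "real set" where
  "circle = {0..<1}"

definition T1 :: "real \<Rightarrow> real \<Rightarrow> real" where
  "T1 \<alpha> y = frac (y + \<alpha>)"

definition T2 :: "real \<Rightarrow> real \<Rightarrow> real \<Rightarrow> real" where
  "T2 \<alpha> \<beta> y = (if y \<le> 1 - \<alpha> then frac (y + \<alpha> + \<beta>) else frac (y + \<alpha>))"

definition Tmap :: "real \<Rightarrow> real \<Rightarrow> nat \<Rightarrow> real \<Rightarrow> real" where
  "Tmap \<alpha> \<beta> j = (if j = 1 then T1 \<alpha> else T2 \<alpha> \<beta>)"

definition word_comp :: "real \<Rightarrow> real \<Rightarrow> nat list \<Rightarrow> real \<Rightarrow> real" where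
  "word_comp \<alpha> \<beta> js = foldr (\<lambda>j f. Tmap \<alpha> \<beta> j \<circ> f) js id"

definition open_arc :: "real \<Rightarrow> real \<Rightarrow> real set" where
  "open_arc a L = {frac (a + t) | t. 0 < t \<and> t < L}"

end

theory Submission
  imports Defs "HOL-Analysis.Kronecker_Approximation_Theorem"
begin

lemma frac_eqI: "x - r \<in> \<int> \<Longrightarrow> 0 \<le> r \<Longrightarrow> r < 1 \<Longrightarrow> frac x = r"
  using frac_unique_iff by blast

lemma frac_cong: assumes "x - y \<in> \<int>" shows "frac x = frac y"
proof -
  have "x - frac y = (x - y) + of_int \<lfloor>y\<rfloor>" by (simp add: frac_def)
  then have "x - frac y \<in> \<int>" using assms by (metis Ints_add Ints_of_int)
  then show ?thesis by (intro frac_eqI) (auto simp: frac_lt_1)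
qed

lemma frac_minus_self: "frac x - x \<in> \<int>"
  by (simp add: frac_def)

lemma dense_frac:
  fixes \<alpha> :: real
  assumes "\<alpha> \<notin> \<rat>" "0 \<le> c" "c < d" "d \<le> 1"
  shows "\<exists>n::nat. c < frac (x + real n * \<alpha>) \<and> frac (x + real n * \<alpha>) < d"
proof -
  define mid where "mid = (c+d)/2"
  define z where "z = frac (mid - x)"
  have "0 \<le> z" "z \<le> 1" using frac_lt_1[of "mid - x"] by (auto simp: z_def)
  moreover have "(d-c)/2 > 0" using assms by simp
  ultimately obtain k where k: "k > 0" "\<bar>frac (real k * \<alpha>) - z\<bar> < (d-c)/2"
    using Kronecker_approx_1_explicit[OF assms(1), of z "(d-c)/2"] by blast
  define r where "r = mid + frac (real k * \<alpha>) - z"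
  have "x + real k * \<alpha> - r = of_int (\<lfloor>real k * \<alpha>\<rfloor> - \<lfloor>mid - x\<rfloor>)"
    by (simp add: r_def z_def frac_def)
  then have ZZ: "x + real k * \<alpha> - r \<in> \<int>" by (metis Ints_of_int)
  have kk: "frac (real k * \<alpha>) - z < (d-c)/2" "z - frac (real k * \<alpha>) < (d-c)/2"
    using abs_less_iff[THEN iffD1, OF k(2)] by linarith+
  have "c < r" using kk unfolding r_def mid_def by (simp add: field_simps)
  moreover have "r < d" using kk unfolding r_def mid_def by (simp add: field_simps)
  ultimately have "frac (x + real k * \<alpha>) = r"
    using assms ZZ by (intro frac_eqI) auto
  then show ?thesis using \<open>c < r\<close> \<open>r < d\<close> by blast
qed

lemma foldr_comp: "foldr (\<lambda>j f. g j \<circ> f) xs h = foldr (\<lambda>j f. g j \<circ> f) xs id \<circ> h"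
  by (induction xs) auto

lemma W_append: "word_comp \<alpha> \<beta> (xs @ ys) = word_comp \<alpha> \<beta> xs \<circ> word_comp \<alpha> \<beta> ys"
  unfolding word_comp_def by (simp add: foldr_comp[of _ xs "foldr _ ys id"])

lemma W_Cons: "word_comp \<alpha> \<beta> (j # js) = Tmap \<alpha> \<beta> j \<circ> word_comp \<alpha> \<beta> js"
  unfolding word_comp_def by simp

lemma W_rep: "word_comp \<alpha> \<beta> (replicate n 1) (frac z) = frac (z + real n * \<alpha>)"
proof (induction n)
  case 0
  then show ?case by (simp add: word_comp_def)
next
  case (Suc n)
  have "word_comp \<alpha> \<beta> (replicate (Suc n) 1) (frac z) = T1 \<alpha> (frac (z + real n * \<alpha>))"
    using Suc by (simp add: W_Cons Tmap_def)
  also have "\<dots> = frac (frac (z + real n * \<alpha>) + \<alpha>)" by (simp add: T1_def)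
  also have "\<dots> = frac (z + real (Suc n) * \<alpha>)"
    by (rule frac_cong) (simp add: frac_def algebra_simps)
  finally show ?case .
qed

lemma W_op: "word_comp \<alpha> \<beta> (2 # replicate n 1) (frac z) =
  (if frac (z + real n * \<alpha>) \<le> 1 - \<alpha> then frac (z + real n * \<alpha> + \<alpha> + \<beta>)
   else frac (z + real n * \<alpha> + \<alpha>))"
proof -
  have "word_comp \<alpha> \<beta> (2 # replicate n 1) (frac z) = T2 \<alpha> \<beta> (word_comp \<alpha> \<beta> (replicate n 1) (frac z))"
    by (simp only: W_Cons Tmap_def comp_def) simp
  also have "\<dots> = T2 \<alpha> \<beta> (frac (z + real n * \<alpha>))" by (simp only: W_rep)
  also have "\<dots> = (if frac (z + real n * \<alpha>) \<le> 1 - \<alpha> then frac (z + real n * \<alpha> + \<alpha> + \<beta>)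
   else frac (z + real n * \<alpha> + \<alpha>))"
    unfolding T2_def
    by (auto intro!: frac_cong simp: frac_def algebra_simps)
  finally show ?thesis .
qed

lemma Ints_diff_frac: "x - frac x \<in> \<int>"
  by (simp add: frac_def)

lemma step:
  fixes \<alpha> \<beta> :: real
  assumes irr: "\<alpha> \<notin> \<rat>" and a0: "0 < \<alpha>" "\<alpha> < 1"
    and "0 \<le> wu" "0 \<le> wv" "wu < 1 - \<alpha>" "wv < \<alpha>" "wu < frac (v0 - u0)"
    "frac (v0 - u0) + wv < 1"
  shows "\<exists>w Q. set w \<subseteq> {1,2} \<and> (\<forall>\<tau>.
     (u0 \<le> \<tau> \<and> \<tau> \<le> u0 + wu \<longrightarrow> word_comp \<alpha> \<beta> w (frac (P+\<tau>)) = frac (Q + (\<tau>+\<beta>))) \<and>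
     (v0 \<le> \<tau> \<and> \<tau> \<le> v0 + wv \<longrightarrow> word_comp \<alpha> \<beta> w (frac (P+\<tau>)) = frac (Q + \<tau>)) \<and>
     (word_comp \<alpha> \<beta> w (frac (P+\<tau>)) = frac (Q + (\<tau>+\<beta>)) \<or> word_comp \<alpha> \<beta> w (frac (P+\<tau>)) = frac (Q + \<tau>)))"
proof -
  define d where "d = frac (v0 - u0)"
  define lo where "lo = max 0 (1-\<alpha>-d)"
  define hi where "hi = min (1-\<alpha>-wu) (1-d-wv)"
  have "lo < hi" "hi \<le> 1" "0 \<le> lo" using assms by (auto simp: lo_def hi_def d_def)
  then obtain n where n: "lo < frac (P + u0 + real n*\<alpha>)" "frac (P + u0 + real n*\<alpha>) < hi"
    using dense_frac[OF irr, of lo hi "P + u0"] by auto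
  define h where "h = frac (P + u0 + real n * \<alpha>)"
  define Q where "Q = P + real n * \<alpha> + \<alpha>"
  have hZ: "(P + u0 + real n * \<alpha>) - h \<in> \<int>" unfolding h_def by (rule Ints_diff_frac)
  have dZ: "(v0 - u0) - d \<in> \<int>" unfolding d_def by (rule Ints_diff_frac)
  have main: "(u0 \<le> \<tau> \<and> \<tau> \<le> u0 + wu \<longrightarrow> word_comp \<alpha> \<beta> (2 # replicate n 1) (frac (P+\<tau>)) = frac (Q + (\<tau>+\<beta>))) \<and>
     (v0 \<le> \<tau> \<and> \<tau> \<le> v0 + wv \<longrightarrow> word_comp \<alpha> \<beta> (2 # replicate n 1) (frac (P+\<tau>)) = frac (Q + \<tau>)) \<and>
     (word_comp \<alpha> \<beta> (2 # replicate n 1) (frac (P+\<tau>)) = frac (Q + (\<tau>+\<beta>)) \<or> word_comp \<alpha> \<beta> (2 # replicate n 1) (frac (P+\<tau>)) = frac (Q + \<tau>))" for \<tau>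
  proof -
    have op: "word_comp \<alpha> \<beta> (2 # replicate n 1) (frac (P+\<tau>)) =
      (if frac (P + \<tau> + real n * \<alpha>) \<le> 1-\<alpha> then frac (Q + (\<tau>+\<beta>)) else frac (Q+\<tau>))"
      unfolding W_op Q_def by (simp add: algebra_simps)
    have U: "frac (P + \<tau> + real n * \<alpha>) \<le> 1-\<alpha>" if "u0 \<le> \<tau>" "\<tau> \<le> u0 + wu"
    proof -
      have eq: "(P + \<tau> + real n * \<alpha>) - (h + (\<tau> - u0)) = (P + u0 + real n * \<alpha>) - h" by simp
      have Z: "(P + \<tau> + real n * \<alpha>) - (h + (\<tau> - u0)) \<in> \<int>" unfolding eq by (rule hZ)
      have hh: "h < 1 - \<alpha> - wu" "0 \<le> h" using n unfolding h_def hi_def by auto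
      have "frac (P + \<tau> + real n * \<alpha>) = h + (\<tau> - u0)"
        using Z hh that a0 by (intro frac_eqI) auto
      then show ?thesis using n that unfolding h_def hi_def by auto
    qed
    have V: "\<not> frac (P + \<tau> + real n * \<alpha>) \<le> 1-\<alpha>" if "v0 \<le> \<tau>" "\<tau> \<le> v0 + wv"
    proof -
      have eq: "(P + \<tau> + real n * \<alpha>) - (h + d + (\<tau> - v0)) = ((P + u0 + real n * \<alpha>) - h) + ((v0 - u0) - d)" by simp
      have Z: "(P + \<tau> + real n * \<alpha>) - (h + d + (\<tau> - v0)) \<in> \<int>" unfolding eq using hZ dZ by (rule Ints_add)
      have hh: "h < 1 - d - wv" "0 \<le> h" using n unfolding h_def hi_def by auto
      have "0 \<le> d" unfolding d_def by simp
      have "frac (P + \<tau> + real n * \<alpha>) = h + d + (\<tau> - v0)"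
        using Z hh that \<open>0 \<le> d\<close> by (intro frac_eqI) auto
      then show ?thesis using n that unfolding h_def lo_def by auto
    qed
    show ?thesis using op U V by auto
  qed
  show ?thesis
    by (rule exI[of _ "2 # replicate n 1"], rule exI[of _ Q]) (use main in auto)
qed

lemma W_Nil: "word_comp \<alpha> \<beta> [] = id"
  by (simp add: word_comp_def)

lemma walk:
  fixes \<alpha> \<beta> :: real
  assumes irr: "\<alpha> \<notin> \<rat>" and a0: "0 < \<alpha>" "\<alpha> < 1"
    and H: "\<forall>j<k. 0 \<le> wu \<and> 0 \<le> wv \<and> wu < 1 - \<alpha> \<and> wv < \<alpha> \<and> wu < frac (v0 - (u0 + real j * \<beta>))
            \<and> frac (v0 - (u0 + real j * \<beta>)) + wv < 1"
  shows "\<exists>w Q. set w \<subseteq> {1,2} \<and> (\<forall>\<tau>.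
     (u0 \<le> \<tau> \<and> \<tau> \<le> u0 + wu \<longrightarrow> word_comp \<alpha> \<beta> w (frac (P+\<tau>)) = frac (Q + (\<tau> + real k * \<beta>))) \<and>
     (v0 \<le> \<tau> \<and> \<tau> \<le> v0 + wv \<longrightarrow> word_comp \<alpha> \<beta> w (frac (P+\<tau>)) = frac (Q + \<tau>)))"
  using H
proof (induction k)
  case 0
  show ?case by (rule exI[of _ "[]"], rule exI[of _ P]) (simp add: W_Nil)
next
  case (Suc k)
  then obtain w Q where w: "set w \<subseteq> {1,2}" and
    wU: "\<And>\<tau>. u0 \<le> \<tau> \<and> \<tau> \<le> u0 + wu \<Longrightarrow> word_comp \<alpha> \<beta> w (frac (P+\<tau>)) = frac (Q + (\<tau> + real k * \<beta>))" and
    wV: "\<And>\<tau>. v0 \<le> \<tau> \<and> \<tau> \<le> v0 + wv \<Longrightarrow> word_comp \<alpha> \<beta> w (frac (P+\<tau>)) = frac (Q + \<tau>)"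
    by (metis less_SucI)
  have c: "0 \<le> wu \<and> 0 \<le> wv \<and> wu < 1 - \<alpha> \<and> wv < \<alpha> \<and> wu < frac (v0 - (u0 + real k * \<beta>))
            \<and> frac (v0 - (u0 + real k * \<beta>)) + wv < 1" using Suc.prems by blast
  obtain w' Q' where w': "set w' \<subseteq> {1,2}" and
    st: "\<And>\<tau>. (u0 + real k * \<beta> \<le> \<tau> \<and> \<tau> \<le> u0 + real k * \<beta> + wu \<longrightarrow> word_comp \<alpha> \<beta> w' (frac (Q+\<tau>)) = frac (Q' + (\<tau>+\<beta>))) \<and>
     (v0 \<le> \<tau> \<and> \<tau> \<le> v0 + wv \<longrightarrow> word_comp \<alpha> \<beta> w' (frac (Q+\<tau>)) = frac (Q' + \<tau>))"
    using step[OF irr a0, of wu wv v0 "u0 + real k * \<beta>" \<beta> Q] c by blast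
  show ?case
  proof (rule exI[of _ "w' @ w"], rule exI[of _ Q'], intro conjI allI impI)
    show "set (w' @ w) \<subseteq> {1,2}" using w w' by auto
  next
    fix \<tau> assume "u0 \<le> \<tau> \<and> \<tau> \<le> u0 + wu"
    then have "word_comp \<alpha> \<beta> (w' @ w) (frac (P+\<tau>)) = word_comp \<alpha> \<beta> w' (frac (Q + (\<tau> + real k * \<beta>)))"
      using wU by (simp add: W_append)
    also have "\<dots> = frac (Q' + ((\<tau> + real k * \<beta>) + \<beta>))"
      using st[of "\<tau> + real k * \<beta>"] \<open>u0 \<le> \<tau> \<and> \<tau> \<le> u0 + wu\<close> by auto
    also have "\<dots> = frac (Q' + (\<tau> + real (Suc k) * \<beta>))" by (simp add: algebra_simps)
    finally show "word_comp \<alpha> \<beta> (w' @ w) (frac (P+\<tau>)) = frac (Q' + (\<tau> + real (Suc k) * \<beta>))" .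
  next
    fix \<tau> assume "v0 \<le> \<tau> \<and> \<tau> \<le> v0 + wv"
    then show "word_comp \<alpha> \<beta> (w' @ w) (frac (P+\<tau>)) = frac (Q' + \<tau>)"
      using wV st[of \<tau>] by (simp add: W_append)
  qed
qed

definition reach :: "real \<Rightarrow> real \<Rightarrow> real \<Rightarrow> bool" where
  "reach \<alpha> \<beta> l \<longleftrightarrow> (\<exists>w p. set w \<subseteq> {1,2} \<and>
      (\<forall>y\<in>circle. \<exists>t. 0 \<le> t \<and> t \<le> l \<and> word_comp \<alpha> \<beta> w y = frac (p+t)))"

lemma cutwalk:
  fixes \<alpha> \<beta> :: real
  assumes irr: "\<alpha> \<notin> \<rat>" and a0: "0 < \<alpha>" "\<alpha> < 1"
    and R: "reach \<alpha> \<beta> l"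
    and sc: "0 \<le> wu" "0 \<le> wv" "wu < 1 - \<alpha>" "wv < \<alpha>" "wu < frac (v0 - u0)"
    "frac (v0 - u0) + wv < 1"
    and cl: "\<forall>t. 0 \<le> t \<and> t \<le> l \<longrightarrow>
       (u0 \<le> t \<and> t \<le> u0 + wu \<longrightarrow> x1 \<le> t+\<beta> \<and> t+\<beta> \<le> x1 + w1) \<and>
       (v0 \<le> t \<and> t \<le> v0 + wv \<longrightarrow> x2 \<le> t \<and> t \<le> x2 + w2) \<and>
       (\<not>(u0 \<le> t \<and> t \<le> u0 + wu) \<and> \<not>(v0 \<le> t \<and> t \<le> v0 + wv) \<longrightarrow>
          x1 \<le> t+\<beta> \<and> t+\<beta> \<le> x1 + w1 \<and> x2 \<le> t \<and> t \<le> x2 + w2)"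
    and wc: "\<forall>j<k. 0 \<le> w1 \<and> 0 \<le> w2 \<and> w1 < 1 - \<alpha> \<and> w2 < \<alpha> \<and> w1 < frac (x2 - (x1 + real j * \<beta>))
            \<and> frac (x2 - (x1 + real j * \<beta>)) + w2 < 1"
  shows "\<exists>w Q. set w \<subseteq> {1,2} \<and> (\<forall>y\<in>circle. \<exists>\<tau>.
     ((x1 + real k * \<beta> \<le> \<tau> \<and> \<tau> \<le> x1 + w1 + real k * \<beta>) \<or> (x2 \<le> \<tau> \<and> \<tau> \<le> x2 + w2))
      \<and> word_comp \<alpha> \<beta> w y = frac (Q + \<tau>))"
proof -
  obtain w0 p where w0: "set w0 \<subseteq> {1,2}"
    and p: "\<And>y. y\<in>circle \<Longrightarrow> \<exists>t. 0 \<le> t \<and> t \<le> l \<and> word_comp \<alpha> \<beta> w0 y = frac (p+t)"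
    using R unfolding reach_def by blast
  obtain w1' Q1 where w1': "set w1' \<subseteq> {1,2}" and
    st: "\<And>\<tau>. (u0 \<le> \<tau> \<and> \<tau> \<le> u0 + wu \<longrightarrow> word_comp \<alpha> \<beta> w1' (frac (p+\<tau>)) = frac (Q1 + (\<tau>+\<beta>))) \<and>
     (v0 \<le> \<tau> \<and> \<tau> \<le> v0 + wv \<longrightarrow> word_comp \<alpha> \<beta> w1' (frac (p+\<tau>)) = frac (Q1 + \<tau>)) \<and>
     (word_comp \<alpha> \<beta> w1' (frac (p+\<tau>)) = frac (Q1 + (\<tau>+\<beta>)) \<or> word_comp \<alpha> \<beta> w1' (frac (p+\<tau>)) = frac (Q1 + \<tau>))"
    using step[OF irr a0 sc, of \<beta> p] by blast
  obtain w2' Q2 where w2': "set w2' \<subseteq> {1,2}" and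
    wk: "\<And>\<tau>. (x1 \<le> \<tau> \<and> \<tau> \<le> x1 + w1 \<longrightarrow> word_comp \<alpha> \<beta> w2' (frac (Q1+\<tau>)) = frac (Q2 + (\<tau> + real k * \<beta>))) \<and>
     (x2 \<le> \<tau> \<and> \<tau> \<le> x2 + w2 \<longrightarrow> word_comp \<alpha> \<beta> w2' (frac (Q1+\<tau>)) = frac (Q2 + \<tau>))"
    using walk[OF irr a0 wc, of Q1] by blast
  have fin: "\<exists>\<tau>. ((x1 + real k * \<beta> \<le> \<tau> \<and> \<tau> \<le> x1 + w1 + real k * \<beta>) \<or> (x2 \<le> \<tau> \<and> \<tau> \<le> x2 + w2))
      \<and> word_comp \<alpha> \<beta> w2' (frac (Q1+s)) = frac (Q2 + \<tau>)"
    if "(x1 \<le> s \<and> s \<le> x1 + w1) \<or> (x2 \<le> s \<and> s \<le> x2 + w2)" for s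
  proof (cases "x1 \<le> s \<and> s \<le> x1 + w1")
    case True
    then show ?thesis using wk[of s] by (intro exI[of _ "s + real k * \<beta>"]) auto
  next
    case False
    then show ?thesis using wk[of s] that by (intro exI[of _ s]) auto
  qed
  have mid: "\<exists>s. ((x1 \<le> s \<and> s \<le> x1 + w1) \<or> (x2 \<le> s \<and> s \<le> x2 + w2)) \<and>
      word_comp \<alpha> \<beta> w1' (frac (p+t)) = frac (Q1 + s)" if "0 \<le> t" "t \<le> l" for t
  proof -
    have c: "(u0 \<le> t \<and> t \<le> u0 + wu \<longrightarrow> x1 \<le> t+\<beta> \<and> t+\<beta> \<le> x1 + w1) \<and>
       (v0 \<le> t \<and> t \<le> v0 + wv \<longrightarrow> x2 \<le> t \<and> t \<le> x2 + w2) \<and>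
       (\<not>(u0 \<le> t \<and> t \<le> u0 + wu) \<and> \<not>(v0 \<le> t \<and> t \<le> v0 + wv) \<longrightarrow>
          x1 \<le> t+\<beta> \<and> t+\<beta> \<le> x1 + w1 \<and> x2 \<le> t \<and> t \<le> x2 + w2)" using cl that by blast
    show ?thesis
    proof (cases "u0 \<le> t \<and> t \<le> u0 + wu")
      case True
      then show ?thesis using c st[of t] by (intro exI[of _ "t+\<beta>"]) auto
    next
      case F1: False
      show ?thesis
      proof (cases "v0 \<le> t \<and> t \<le> v0 + wv")
        case True
        then show ?thesis using c st[of t] by (intro exI[of _ "t"]) auto
      next
        case False
        then show ?thesis using F1 c st[of t] by blast
      qed
    qed
  qed
  show ?thesis
  proof (rule exI[of _ "w2' @ w1' @ w0"], rule exI[of _ Q2], intro conjI ballI)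
    show "set (w2' @ w1' @ w0) \<subseteq> {1,2}" using w0 w1' w2' by auto
  next
    fix y assume "y \<in> circle"
    then obtain t where t: "0 \<le> t" "t \<le> l" "word_comp \<alpha> \<beta> w0 y = frac (p+t)" using p by blast
    then obtain s where s: "((x1 \<le> s \<and> s \<le> x1 + w1) \<or> (x2 \<le> s \<and> s \<le> x2 + w2))"
      "word_comp \<alpha> \<beta> w1' (frac (p+t)) = frac (Q1 + s)" using mid by blast
    obtain \<tau> where "((x1 + real k * \<beta> \<le> \<tau> \<and> \<tau> \<le> x1 + w1 + real k * \<beta>) \<or> (x2 \<le> \<tau> \<and> \<tau> \<le> x2 + w2))"
      "word_comp \<alpha> \<beta> w2' (frac (Q1+s)) = frac (Q2 + \<tau>)" using fin[OF s(1)] by blast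
    then show "\<exists>\<tau>. ((x1 + real k * \<beta> \<le> \<tau> \<and> \<tau> \<le> x1 + w1 + real k * \<beta>) \<or> (x2 \<le> \<tau> \<and> \<tau> \<le> x2 + w2))
      \<and> word_comp \<alpha> \<beta> (w2' @ w1' @ w0) y = frac (Q2 + \<tau>)"
      using t s by (auto simp: W_append)
  qed
qed

lemma reach_of:
  assumes "set w \<subseteq> {1,2}" "\<forall>y\<in>circle. \<exists>\<tau>. lo \<le> \<tau> \<and> \<tau> \<le> hi \<and> word_comp \<alpha> \<beta> w y = frac (Q + \<tau>)"
  shows "reach \<alpha> \<beta> (hi - lo)"
  unfolding reach_def
proof (rule exI[of _ w], rule exI[of _ "Q + lo"], intro conjI ballI)
  show "set w \<subseteq> {1,2}" by fact
next
  fix y assume "y \<in> circle"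
  then obtain \<tau> where "lo \<le> \<tau>" "\<tau> \<le> hi" "word_comp \<alpha> \<beta> w y = frac (Q + \<tau>)" using assms by blast
  then show "\<exists>t. 0 \<le> t \<and> t \<le> hi - lo \<and> word_comp \<alpha> \<beta> w y = frac (Q + lo + t)"
    by (intro exI[of _ "\<tau> - lo"]) auto
qed

lemma reach_mono: "reach \<alpha> \<beta> l \<Longrightarrow> l \<le> l' \<Longrightarrow> reach \<alpha> \<beta> l'"
  unfolding reach_def by (meson order_trans)

lemma reach_init:
  assumes "0 < \<beta>" "\<beta> < \<alpha>" "\<alpha> < 1" "\<beta> < 1 - \<alpha>"
  shows "reach \<alpha> \<beta> (1 - \<beta>)"
  unfolding reach_def
proof (rule exI[of _ "[2]"], rule exI[of _ "\<alpha> + \<beta>"], intro conjI ballI)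
  show "set [2::nat] \<subseteq> {1,2}" by auto
next
  fix y assume "y \<in> circle"
  then have y: "0 \<le> y" "y < 1" by (auto simp: circle_def)
  have W: "word_comp \<alpha> \<beta> [2] y = T2 \<alpha> \<beta> y" by (simp add: word_comp_def Tmap_def)
  show "\<exists>t. 0 \<le> t \<and> t \<le> 1 - \<beta> \<and> word_comp \<alpha> \<beta> [2] y = frac (\<alpha> + \<beta> + t)"
  proof (cases "y \<le> 1 - \<alpha>")
    case True
    then show ?thesis using y assms W by (intro exI[of _ y]) (auto simp: T2_def algebra_simps)
  next
    case False
    then show ?thesis using y assms W by (intro exI[of _ "y - \<beta>"]) (auto simp: T2_def algebra_simps)
  qed
qed

lemma phase1:
  fixes \<alpha> \<beta> :: real
  assumes irr: "\<alpha> \<notin> \<rat>" and a0: "0 < \<alpha>" "\<alpha> < 1"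
    and b: "0 < \<beta>" "\<beta> < \<alpha>" "\<beta> < 1 - \<alpha>"
    and R: "reach \<alpha> \<beta> l" and l: "2 * \<beta> < l" "l < 1"
  shows "reach \<alpha> \<beta> (l - \<beta>)"
proof -
  have fr: "frac (l - \<beta> - 0) = l - \<beta>" using l b by (simp add: frac_eq)
  obtain w Q where w: "set w \<subseteq> {1,2}" and
    H: "\<forall>y\<in>circle. \<exists>\<tau>. ((\<beta> + real 0 * \<beta> \<le> \<tau> \<and> \<tau> \<le> \<beta> + (l - \<beta>) + real 0 * \<beta>) \<or> (\<beta> \<le> \<tau> \<and> \<tau> \<le> \<beta> + (l-\<beta>)))
      \<and> word_comp \<alpha> \<beta> w y = frac (Q + \<tau>)"
    using cutwalk[OF irr a0 R, of \<beta> \<beta> "l - \<beta>" 0 \<beta> "l-\<beta>" \<beta> "l - \<beta>" 0] fr b l by auto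
  have "\<forall>y\<in>circle. \<exists>\<tau>. \<beta> \<le> \<tau> \<and> \<tau> \<le> l \<and> word_comp \<alpha> \<beta> w y = frac (Q + \<tau>)"
    using H by auto
  from reach_of[OF w this] show ?thesis .
qed

lemma frac_subH: assumes "0 \<le> a" "a < frac z" shows "frac (a - z) = a - frac z + 1"
proof (rule frac_eqI)
  have "(a - z) - (a - frac z + 1) = of_int (- \<lfloor>z\<rfloor> - 1)" by (simp add: frac_def)
  then show "(a - z) - (a - frac z + 1) \<in> \<int>" by (metis Ints_of_int)
  show "0 \<le> a - frac z + 1" using assms frac_lt_1[of z] by linarith
  show "a - frac z + 1 < 1" using assms by linarith
qed

lemma frac_subG: assumes "0 < a + frac z" "a + frac z \<le> 1" shows "frac (- (a + z)) = 1 - a - frac z"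
proof (rule frac_eqI)
  have "(- (a + z)) - (1 - a - frac z) = of_int (- \<lfloor>z\<rfloor> - 1)" by (simp add: frac_def)
  then show "(- (a + z)) - (1 - a - frac z) \<in> \<int>" by (metis Ints_of_int)
  show "0 \<le> 1 - a - frac z" using assms by linarith
  show "1 - a - frac z < 1" using assms by linarith
qed

lemma frac_shift_int: "frac (Q + \<tau>) = frac (Q + (\<tau> - of_int K))"
  by (rule frac_cong) simp

lemma H_case:
  fixes \<alpha> \<beta> :: real
  assumes irr: "\<alpha> \<notin> \<rat>" and a0: "0 < \<alpha>" "\<alpha> < 1" and b0: "0 < \<beta>"
    and R: "reach \<alpha> \<beta> l" and q: "1 \<le> q" "frac (real q * \<beta>) = \<gamma>"
    and e: "0 < \<epsilon>" "\<epsilon> \<le> \<gamma>" "\<gamma> + \<epsilon> \<le> l" and l: "l < \<alpha>" "l < 1 - \<alpha>"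
    and F: "\<forall>j. 1 \<le> j \<and> j < q \<longrightarrow> l < frac (real j * \<beta>) \<and> frac (real j * \<beta>) < 1 - 2 * \<epsilon>"
  shows "reach \<alpha> \<beta> (l + \<epsilon> - min \<gamma> (l - \<gamma> - \<epsilon>))"
proof -
  define a where "a = l - \<gamma> - \<epsilon>"
  define b where "b = l - \<gamma> + \<epsilon>"
  have ab: "0 \<le> a" "a < b" "b \<le> l" "b < 1" using e l a0 by (auto simp: a_def b_def)
  have fb: "frac (b - 0) = b" using ab by (simp add: frac_eq)
  have sc: "0 \<le> a" "0 \<le> \<gamma> - \<epsilon>" "a < 1 - \<alpha>" "\<gamma> - \<epsilon> < \<alpha>" "a < frac (b - 0)"
    "frac (b - 0) + (\<gamma> - \<epsilon>) < 1" using ab e l fb by (auto simp: a_def b_def)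
  have cl: "\<forall>t. 0 \<le> t \<and> t \<le> l \<longrightarrow>
       (0 \<le> t \<and> t \<le> 0 + a \<longrightarrow> \<beta> \<le> t+\<beta> \<and> t+\<beta> \<le> \<beta> + b) \<and>
       (b \<le> t \<and> t \<le> b + (\<gamma> - \<epsilon>) \<longrightarrow> a \<le> t \<and> t \<le> a + (\<gamma> + \<epsilon>)) \<and>
       (\<not>(0 \<le> t \<and> t \<le> 0 + a) \<and> \<not>(b \<le> t \<and> t \<le> b + (\<gamma> - \<epsilon>)) \<longrightarrow>
          \<beta> \<le> t+\<beta> \<and> t+\<beta> \<le> \<beta> + b \<and> a \<le> t \<and> t \<le> a + (\<gamma> + \<epsilon>))"
    using ab by (auto simp: a_def b_def)
  have wc: "\<forall>j<q-1. 0 \<le> b \<and> 0 \<le> \<gamma> + \<epsilon> \<and> b < 1 - \<alpha> \<and> \<gamma> + \<epsilon> < \<alpha> \<and> b < frac (a - (\<beta> + real j * \<beta>))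
            \<and> frac (a - (\<beta> + real j * \<beta>)) + (\<gamma> + \<epsilon>) < 1"
  proof (intro allI impI)
    fix j assume j: "j < q - 1"
    have Fj: "l < frac (real (Suc j) * \<beta>)" "frac (real (Suc j) * \<beta>) < 1 - 2 * \<epsilon>"
      using F[rule_format, of "Suc j"] j by linarith+
    have eq: "a - (\<beta> + real j * \<beta>) = a - real (Suc j) * \<beta>" by (simp add: algebra_simps)
    have fr: "frac (a - (\<beta> + real j * \<beta>)) = a - frac (real (Suc j) * \<beta>) + 1"
      unfolding eq using ab Fj by (intro frac_subH) auto
    show "0 \<le> b \<and> 0 \<le> \<gamma> + \<epsilon> \<and> b < 1 - \<alpha> \<and> \<gamma> + \<epsilon> < \<alpha> \<and> b < frac (a - (\<beta> + real j * \<beta>))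
            \<and> frac (a - (\<beta> + real j * \<beta>)) + (\<gamma> + \<epsilon>) < 1"
      unfolding fr using ab Fj e l by (auto simp: a_def b_def)
  qed
  obtain w Q where w: "set w \<subseteq> {1,2}" and
    H: "\<forall>y\<in>circle. \<exists>\<tau>. ((\<beta> + real (q-1) * \<beta> \<le> \<tau> \<and> \<tau> \<le> \<beta> + b + real (q-1) * \<beta>) \<or> (a \<le> \<tau> \<and> \<tau> \<le> a + (\<gamma> + \<epsilon>)))
      \<and> word_comp \<alpha> \<beta> w y = frac (Q + \<tau>)"
    using cutwalk[OF irr a0 R sc cl wc] by blast
  define K where "K = \<lfloor>real q * \<beta>\<rfloor>"
  have qb: "\<beta> + real (q-1) * \<beta> = \<gamma> + of_int K"
    using q unfolding K_def by (simp add: of_nat_diff algebra_simps frac_def)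
  have "\<forall>y\<in>circle. \<exists>\<tau>. min \<gamma> a \<le> \<tau> \<and> \<tau> \<le> l + \<epsilon> \<and> word_comp \<alpha> \<beta> w y = frac (Q + \<tau>)"
  proof
    fix y assume "y \<in> circle"
    then obtain \<tau> where t: "((\<beta> + real (q-1) * \<beta> \<le> \<tau> \<and> \<tau> \<le> \<beta> + b + real (q-1) * \<beta>) \<or> (a \<le> \<tau> \<and> \<tau> \<le> a + (\<gamma> + \<epsilon>)))"
      "word_comp \<alpha> \<beta> w y = frac (Q + \<tau>)" using H by blast
    show "\<exists>\<tau>. min \<gamma> a \<le> \<tau> \<and> \<tau> \<le> l + \<epsilon> \<and> word_comp \<alpha> \<beta> w y = frac (Q + \<tau>)"
    proof (cases "a \<le> \<tau> \<and> \<tau> \<le> a + (\<gamma> + \<epsilon>)")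
      case True
      then show ?thesis using t e by (intro exI[of _ \<tau>]) (auto simp: a_def)
    next
      case False
      then have "\<gamma> + of_int K \<le> \<tau> \<and> \<tau> \<le> b + \<gamma> + of_int K" using t qb by auto
      then show ?thesis using t frac_shift_int[of Q \<tau> K]
        by (intro exI[of _ "\<tau> - of_int K"]) (auto simp: b_def)
    qed
  qed
  from reach_of[OF w this] show ?thesis by (simp add: a_def)
qed

lemma G_case:
  fixes \<alpha> \<beta> :: real
  assumes irr: "\<alpha> \<notin> \<rat>" and a0: "0 < \<alpha>" "\<alpha> < 1" and b0: "0 < \<beta>"
    and R: "reach \<alpha> \<beta> l" and q: "1 \<le> q" "frac (real q * \<beta>) = 1 - \<gamma>"
    and e: "0 < \<epsilon>" "\<epsilon> \<le> \<gamma>" "\<gamma> + \<epsilon> \<le> l" and l: "l < \<alpha>" "l < 1 - \<alpha>"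
    and F: "\<forall>j. 1 \<le> j \<and> j < q \<longrightarrow> 2 * \<epsilon> < frac (real j * \<beta>) \<and> frac (real j * \<beta>) < 1 - l"
  shows "reach \<alpha> \<beta> (max (\<gamma> + \<epsilon>) (l - \<gamma>) + \<epsilon>)"
proof -
  define a where "a = \<gamma> - \<epsilon>"
  define b where "b = \<gamma> + \<epsilon>"
  have ab: "0 \<le> a" "a < b" "b \<le> l" "b < 1" "0 < b" using e l a0 by (auto simp: a_def b_def)
  have fb: "frac (0 - b) = 1 - b" using ab by (intro frac_eqI) auto
  have sc: "0 \<le> l - b" "0 \<le> a" "l - b < 1 - \<alpha>" "a < \<alpha>" "l - b < frac (0 - b)"
    "frac (0 - b) + a < 1" using ab e l fb by (auto simp: a_def b_def)
  have cl: "\<forall>t. 0 \<le> t \<and> t \<le> l \<longrightarrow>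
       (b \<le> t \<and> t \<le> b + (l - b) \<longrightarrow> a + \<beta> \<le> t+\<beta> \<and> t+\<beta> \<le> a + \<beta> + (l - a)) \<and>
       (0 \<le> t \<and> t \<le> 0 + a \<longrightarrow> 0 \<le> t \<and> t \<le> 0 + b) \<and>
       (\<not>(b \<le> t \<and> t \<le> b + (l - b)) \<and> \<not>(0 \<le> t \<and> t \<le> 0 + a) \<longrightarrow>
          a + \<beta> \<le> t+\<beta> \<and> t+\<beta> \<le> a + \<beta> + (l - a) \<and> 0 \<le> t \<and> t \<le> 0 + b)"
    using ab by (auto simp: a_def b_def)
  have wc: "\<forall>j<q-1. 0 \<le> l - a \<and> 0 \<le> b \<and> l - a < 1 - \<alpha> \<and> b < \<alpha> \<and> l - a < frac (0 - (a + \<beta> + real j * \<beta>))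
            \<and> frac (0 - (a + \<beta> + real j * \<beta>)) + b < 1"
  proof (intro allI impI)
    fix j assume j: "j < q - 1"
    have Fj: "2 * \<epsilon> < frac (real (Suc j) * \<beta>)" "frac (real (Suc j) * \<beta>) < 1 - l"
      using F[rule_format, of "Suc j"] j by linarith+
    have eq: "0 - (a + \<beta> + real j * \<beta>) = - (a + real (Suc j) * \<beta>)" by (simp add: algebra_simps)
    have fr: "frac (0 - (a + \<beta> + real j * \<beta>)) = 1 - a - frac (real (Suc j) * \<beta>)"
      unfolding eq using ab Fj e by (intro frac_subG) (auto simp: a_def)
    show "0 \<le> l - a \<and> 0 \<le> b \<and> l - a < 1 - \<alpha> \<and> b < \<alpha> \<and> l - a < frac (0 - (a + \<beta> + real j * \<beta>))
            \<and> frac (0 - (a + \<beta> + real j * \<beta>)) + b < 1"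
      unfolding fr using ab Fj e l by (auto simp: a_def b_def)
  qed
  obtain w Q where w: "set w \<subseteq> {1,2}" and
    H: "\<forall>y\<in>circle. \<exists>\<tau>. ((a + \<beta> + real (q-1) * \<beta> \<le> \<tau> \<and> \<tau> \<le> a + \<beta> + (l - a) + real (q-1) * \<beta>) \<or> (0 \<le> \<tau> \<and> \<tau> \<le> 0 + b))
      \<and> word_comp \<alpha> \<beta> w y = frac (Q + \<tau>)"
    using cutwalk[OF irr a0 R sc cl wc] by blast
  define K where "K = \<lfloor>real q * \<beta>\<rfloor> + 1"
  have qb: "\<beta> + real (q-1) * \<beta> = 1 - \<gamma> + of_int K - 1"
    using q unfolding K_def by (simp add: of_nat_diff algebra_simps frac_def)
  have "\<forall>y\<in>circle. \<exists>\<tau>. - \<epsilon> \<le> \<tau> \<and> \<tau> \<le> max (\<gamma> + \<epsilon>) (l - \<gamma>) \<and> word_comp \<alpha> \<beta> w y = frac (Q + \<tau>)"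
  proof
    fix y assume "y \<in> circle"
    then obtain \<tau> where t: "((a + \<beta> + real (q-1) * \<beta> \<le> \<tau> \<and> \<tau> \<le> a + \<beta> + (l - a) + real (q-1) * \<beta>) \<or> (0 \<le> \<tau> \<and> \<tau> \<le> 0 + b))"
      "word_comp \<alpha> \<beta> w y = frac (Q + \<tau>)" using H by blast
    show "\<exists>\<tau>. - \<epsilon> \<le> \<tau> \<and> \<tau> \<le> max (\<gamma> + \<epsilon>) (l - \<gamma>) \<and> word_comp \<alpha> \<beta> w y = frac (Q + \<tau>)"
    proof (cases "0 \<le> \<tau> \<and> \<tau> \<le> 0 + b")
      case True
      then show ?thesis using t e by (intro exI[of _ \<tau>]) (auto simp: b_def)
    next
      case False
      then have "a - \<gamma> + of_int K \<le> \<tau> \<and> \<tau> \<le> l - \<gamma> + of_int K" using t qb by auto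
      then show ?thesis using t frac_shift_int[of Q \<tau> K]
        by (intro exI[of _ "\<tau> - of_int K"]) (auto simp: a_def)
    qed
  qed
  from reach_of[OF w this] show ?thesis by simp
qed

lemma finite_margin:
  fixes F :: "real set"
  assumes "finite F" "\<forall>x\<in>F. lo < x \<and> x < hi"
  shows "\<exists>\<kappa>>0. \<forall>x\<in>F. lo + \<kappa> < x \<and> x < hi - \<kappa>"
  using assms
proof (induction F rule: finite_induct)
  case empty
  then show ?case by (intro exI[of _ 1]) auto
next
  case (insert x F)
  then obtain \<kappa> where k: "\<kappa> > 0" "\<forall>x\<in>F. lo + \<kappa> < x \<and> x < hi - \<kappa>" by auto
  have x: "lo < x" "x < hi" using insert by auto
  define k' where "k' = min \<kappa> (min ((x - lo)/2) ((hi - x)/2))"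
  have k': "k' > 0" "k' \<le> \<kappa>" "k' \<le> (x - lo)/2" "k' \<le> (hi - x)/2"
    using k x unfolding k'_def by (simp, meson min.cobounded1 min.cobounded2 order_trans,
       meson min.cobounded1 min.cobounded2 order_trans, meson min.cobounded1 min.cobounded2 order_trans)
  show ?case
  proof (rule exI[of _ k'], rule conjI)
    show "k' > 0" by fact
  next
    show "\<forall>y\<in>insert x F. lo + k' < y \<and> y < hi - k'"
    proof
    fix y assume "y \<in> insert x F"
    then show "lo + k' < y \<and> y < hi - k'"
    proof
      assume "y = x" then show ?thesis using k' x by auto
    next
      assume "y \<in> F" then show ?thesis using k' k(2) by force
    qed
    qed
  qed
qed

lemma mult_not_int:
  fixes \<beta> :: real
  assumes "\<beta> \<notin> \<rat>" "1 \<le> j"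
  shows "real j * \<beta> \<notin> \<int>"
proof
  assume "real j * \<beta> \<in> \<int>"
  then obtain k where "real j * \<beta> = of_int k" by (auto elim: Ints_cases)
  then have "\<beta> = of_int k / real j" using assms(2) by (simp add: field_simps)
  then have "\<beta> \<in> \<rat>" by (simp add: Rats_divide)
  then show False using assms(1) by simp
qed

lemma small:
  fixes \<alpha> \<beta> :: real
  assumes irr: "\<alpha> \<notin> \<rat>" and a0: "0 < \<alpha>" "\<alpha> < 1"
    and birr: "\<beta> \<notin> \<rat>" and b0: "0 < \<beta>" "\<beta> < min \<alpha> (1 - \<alpha>) / 8"
  shows "\<forall>e>0. \<exists>l. l < e \<and> reach \<alpha> \<beta> l"
proof (rule ccontr)
  assume "\<not> ?thesis"
  then obtain e0 where e0: "e0 > 0" "\<And>l. reach \<alpha> \<beta> l \<Longrightarrow> e0 \<le> l" by (auto simp: not_less)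
  have bb: "\<beta> < \<alpha> / 8" "\<beta> < (1 - \<alpha>) / 8" using b0 by auto
  define S where "S = {l. reach \<alpha> \<beta> l}"
  define m where "m = Inf S"
  have init: "reach \<alpha> \<beta> (1 - \<beta>)" using reach_init[of \<beta> \<alpha>] bb b0 a0 by auto
  have Sne: "S \<noteq> {}" using init by (auto simp: S_def)
  have bdd: "bdd_below S" using e0 unfolding S_def bdd_below_def by auto
  have lower: "\<And>l. reach \<alpha> \<beta> l \<Longrightarrow> m \<le> l" unfolding m_def
    by (rule cInf_lower) (use bdd in \<open>auto simp: S_def\<close>)
  have mpos: "e0 \<le> m" unfolding m_def by (rule cInf_greatest[OF Sne]) (use e0 in \<open>auto simp: S_def\<close>)
  have approx: "\<exists>l. reach \<alpha> \<beta> l \<and> l < m + d" if "d > 0" for d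
  proof (rule ccontr)
    assume "\<not> ?thesis"
    then have "m + d \<le> m" unfolding m_def by (intro cInf_greatest[OF Sne]) (auto simp: S_def not_less)
    then show False using that by simp
  qed
  have m1: "m \<le> 1 - \<beta>" using lower[OF init] .
  show False
  proof (cases "2 * \<beta> < m")
    case True
    obtain l where l: "reach \<alpha> \<beta> l" "l < m + min \<beta> (1 - m)"
      using approx[of "min \<beta> (1 - m)"] m1 b0 by auto
    have "m \<le> l" using lower[OF l(1)] .
    then have "reach \<alpha> \<beta> (l - \<beta>)" using phase1[OF irr a0 b0(1) _ _ l(1)] bb True l(2) by auto
    then have "m \<le> l - \<beta>" by (rule lower)
    then show False using l(2) by auto
  next
    case False
    then have mb: "m \<le> 2 * \<beta>" by simp
    have m0: "0 < m" using mpos e0 by simp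
    have notint: "\<And>j. 1 \<le> j \<Longrightarrow> frac (real j * \<beta>) > 0"
      using mult_not_int[OF birr] by simp
    obtain n1 where n1: "0 < frac (0 + real n1 * \<beta>)" "frac (0 + real n1 * \<beta>) < m"
      using dense_frac[OF birr, of 0 m 0] m0 mb bb by auto
    have ex1: "\<exists>j. 1 \<le> j \<and> frac (real j * \<beta>) \<le> m"
      using n1 by (intro exI[of _ n1]) (auto simp: Suc_le_eq intro: Nat.gr0I)
    define qp where "qp = (LEAST j. 1 \<le> j \<and> frac (real j * \<beta>) \<le> m)"
    have qp: "1 \<le> qp" "frac (real qp * \<beta>) \<le> m"
      using LeastI_ex[OF ex1] unfolding qp_def by auto
    have qpmin: "\<And>j. 1 \<le> j \<Longrightarrow> j < qp \<Longrightarrow> m < frac (real j * \<beta>)"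
      using not_less_Least unfolding qp_def by fastforce
    obtain n2 where n2: "1 - m < frac (0 + real n2 * \<beta>)" "frac (0 + real n2 * \<beta>) < 1"
      using dense_frac[OF birr, of "1 - m" 1 0] m0 mb bb a0 by auto
    have ex2: "\<exists>j. 1 \<le> j \<and> 1 - m \<le> frac (real j * \<beta>)"
      using n2 m0 mb bb a0 by (intro exI[of _ n2]) (cases n2, auto)
    define qm where "qm = (LEAST j. 1 \<le> j \<and> 1 - m \<le> frac (real j * \<beta>))"
    have qm: "1 \<le> qm" "1 - m \<le> frac (real qm * \<beta>)"
      using LeastI_ex[OF ex2] unfolding qm_def by auto
    have qmmin: "\<And>j. 1 \<le> j \<Longrightarrow> j < qm \<Longrightarrow> frac (real j * \<beta>) < 1 - m"
      using not_less_Least unfolding qm_def by fastforce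
    define gp where "gp = frac (real qp * \<beta>)"
    define gm where "gm = 1 - frac (real qm * \<beta>)"
    have gp: "0 < gp" "gp \<le> m" using qp notint unfolding gp_def by auto
    have gm: "0 < gm" "gm \<le> m" using qm frac_lt_1 unfolding gm_def by auto
    have notboth: "gp < m \<or> gm < m"
    proof (rule ccontr)
      assume "\<not> ?thesis"
      then have "gp = m" "gm = m" using gp gm by auto
      then have "frac (real qp * \<beta>) + frac (real qm * \<beta>) = 1" unfolding gp_def gm_def by simp
      then have "real (qp + qm) * \<beta> = of_int (\<lfloor>real qp * \<beta>\<rfloor> + \<lfloor>real qm * \<beta>\<rfloor> + 1)"
        by (simp add: frac_def algebra_simps)
      then have "real (qp + qm) * \<beta> \<in> \<int>" by (metis Ints_of_int)
      moreover have "1 \<le> qp + qm" using qp by simp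
      ultimately show False using mult_not_int[OF birr] by blast
    qed
    have lt: "m < \<alpha> / 4" "m < (1 - \<alpha>) / 4" using mb bb by auto
    show False
    proof (cases "gp < m")
      case True
      define F where "F = (\<lambda>j. frac (real j * \<beta>)) ` {1..<qp}"
      have "finite F" unfolding F_def by simp
      moreover have "\<forall>x\<in>F. m < x \<and> x < 1" unfolding F_def using qpmin frac_lt_1 by auto
      ultimately obtain \<kappa> where k: "\<kappa> > 0" "\<forall>x\<in>F. m + \<kappa> < x \<and> x < 1 - \<kappa>"
        using finite_margin by blast
      have kj: "m + \<kappa> < frac (real j * \<beta>) \<and> frac (real j * \<beta>) < 1 - \<kappa>" if "1 \<le> j" "j < qp" for j
        using k(2) that unfolding F_def by auto
      define \<epsilon> where "\<epsilon> = min (\<kappa>/3) (min (gp/3) ((m - gp)/3))"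
      define \<delta> where "\<delta> = min \<kappa> (min (gp/3) (min (\<alpha>/4) ((1-\<alpha>)/4)))"
      have ep: "0 < \<epsilon>" "\<epsilon> \<le> \<kappa>/3" "\<epsilon> \<le> gp/3" "\<epsilon> \<le> (m-gp)/3"
        using k gp True unfolding \<epsilon>_def by (simp, (meson min.cobounded1 min.cobounded2 order_trans)+)
      have dp: "0 < \<delta>" "\<delta> \<le> \<kappa>" "\<delta> \<le> gp/3" "\<delta> \<le> \<alpha>/4" "\<delta> \<le> (1-\<alpha>)/4"
        using k gp a0 unfolding \<delta>_def by (simp, (meson min.cobounded1 min.cobounded2 order_trans)+)
      obtain l where l: "reach \<alpha> \<beta> l" "l < m + \<delta>" using approx dp by blast
      have ml: "m \<le> l" using lower[OF l(1)] .
      have "reach \<alpha> \<beta> (l + \<epsilon> - min gp (l - gp - \<epsilon>))"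
      proof (rule H_case[OF irr a0 b0(1) l(1) qp(1)])
        show "frac (real qp * \<beta>) = gp" by (simp add: gp_def)
        show "0 < \<epsilon>" "\<epsilon> \<le> gp" "gp + \<epsilon> \<le> l" using ep gp ml True by auto
        show "l < \<alpha>" "l < 1 - \<alpha>" using l(2) dp lt by auto
        show "\<forall>j. 1 \<le> j \<and> j < qp \<longrightarrow> l < frac (real j * \<beta>) \<and> frac (real j * \<beta>) < 1 - 2 * \<epsilon>"
          using kj l(2) dp ep by force
      qed
      then have "m \<le> l + \<epsilon> - min gp (l - gp - \<epsilon>)" by (rule lower)
      then show False using l(2) ep dp True by (auto simp: min_def split: if_splits)
    next
      case False
      then have True: "gm < m" using notboth by simp
      define F where "F = (\<lambda>j. frac (real j * \<beta>)) ` {1..<qm}"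
      have "finite F" unfolding F_def by simp
      moreover have "\<forall>x\<in>F. 0 < x \<and> x < 1 - m" unfolding F_def using qmmin notint by auto
      ultimately obtain \<kappa> where k: "\<kappa> > 0" "\<forall>x\<in>F. 0 + \<kappa> < x \<and> x < 1 - m - \<kappa>"
        using finite_margin by blast
      have kj: "\<kappa> < frac (real j * \<beta>) \<and> frac (real j * \<beta>) < 1 - m - \<kappa>" if "1 \<le> j" "j < qm" for j
        using k(2) that unfolding F_def by auto
      define \<epsilon> where "\<epsilon> = min (\<kappa>/3) (min (gm/3) ((m - gm)/3))"
      define \<delta> where "\<delta> = min \<kappa> (min (gm/3) (min (\<alpha>/4) ((1-\<alpha>)/4)))"
      have ep: "0 < \<epsilon>" "\<epsilon> \<le> \<kappa>/3" "\<epsilon> \<le> gm/3" "\<epsilon> \<le> (m-gm)/3"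
        using k gm True unfolding \<epsilon>_def by (simp, (meson min.cobounded1 min.cobounded2 order_trans)+)
      have dp: "0 < \<delta>" "\<delta> \<le> \<kappa>" "\<delta> \<le> gm/3" "\<delta> \<le> \<alpha>/4" "\<delta> \<le> (1-\<alpha>)/4"
        using k gm a0 unfolding \<delta>_def by (simp, (meson min.cobounded1 min.cobounded2 order_trans)+)
      obtain l where l: "reach \<alpha> \<beta> l" "l < m + \<delta>" using approx dp by blast
      have ml: "m \<le> l" using lower[OF l(1)] .
      have "reach \<alpha> \<beta> (max (gm + \<epsilon>) (l - gm) + \<epsilon>)"
      proof (rule G_case[OF irr a0 b0(1) l(1) qm(1)])
        show "frac (real qm * \<beta>) = 1 - gm" by (simp add: gm_def)
        show "0 < \<epsilon>" "\<epsilon> \<le> gm" "gm + \<epsilon> \<le> l" using ep gm ml True by auto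
        show "l < \<alpha>" "l < 1 - \<alpha>" using l(2) dp lt by auto
        show "\<forall>j. 1 \<le> j \<and> j < qm \<longrightarrow> 2 * \<epsilon> < frac (real j * \<beta>) \<and> frac (real j * \<beta>) < 1 - l"
          using kj l(2) dp ep by force
      qed
      then have "m \<le> max (gm + \<epsilon>) (l - gm) + \<epsilon>" by (rule lower)
      then show False using l(2) ep dp True by (auto simp: max_def split: if_splits)
    qed
  qed
qed

theorem lemma4p1:
  fixes \<alpha> :: real
  assumes "0 < \<alpha>" and "\<alpha> < 1" and "\<alpha> \<notin> \<rat>"
  shows "\<exists>\<beta>0 > 0. \<forall>\<beta>. 0 < \<beta> \<and> \<beta> < \<beta>0 \<and> \<beta> \<notin> \<rat> \<longrightarrow>
           (\<forall>a L. 0 < L \<and> L \<le> 1 \<longrightarrow>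
              (\<exists>js. set js \<subseteq> {1, 2} \<and>
                    word_comp \<alpha> \<beta> js ` circle \<subseteq> open_arc a L))"
proof (rule exI[of _ "min \<alpha> (1 - \<alpha>) / 8"], intro conjI allI impI)
  show "0 < min \<alpha> (1 - \<alpha>) / 8" using assms by simp
next
  fix \<beta> a L :: real
  assume b: "0 < \<beta> \<and> \<beta> < min \<alpha> (1 - \<alpha>) / 8 \<and> \<beta> \<notin> \<rat>" and L: "0 < L \<and> L \<le> 1"
  obtain l where l: "l < L" "reach \<alpha> \<beta> l"
    using small[OF assms(3,1,2), of \<beta>] b L by blast
  then obtain w p where w: "set w \<subseteq> {1,2}"
    and p: "\<And>y. y\<in>circle \<Longrightarrow> \<exists>t. 0 \<le> t \<and> t \<le> l \<and> word_comp \<alpha> \<beta> w y = frac (p+t)"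
    unfolding reach_def by blast
  have "0 \<in> circle" by (simp add: circle_def)
  then have l0: "0 \<le> l" using p by force
  obtain n where n: "0 < frac (p - a + real n * \<alpha>)" "frac (p - a + real n * \<alpha>) < L - l"
    using dense_frac[OF assms(3), of 0 "L - l" "p - a"] l L l0 by auto
  define h where "h = frac (p - a + real n * \<alpha>)"
  have hZ: "(p - a + real n * \<alpha>) - h \<in> \<int>" unfolding h_def by (rule Ints_diff_frac)
  show "\<exists>js. set js \<subseteq> {1, 2} \<and> word_comp \<alpha> \<beta> js ` circle \<subseteq> open_arc a L"
  proof (rule exI[of _ "replicate n 1 @ w"], rule conjI)
    show "set (replicate n 1 @ w) \<subseteq> {1,2}" using w by auto
  next
    show "word_comp \<alpha> \<beta> (replicate n 1 @ w) ` circle \<subseteq> open_arc a L"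
    proof (rule subsetI)
    fix x assume "x \<in> word_comp \<alpha> \<beta> (replicate n 1 @ w) ` circle"
    then obtain y where y: "y \<in> circle" "x = word_comp \<alpha> \<beta> (replicate n 1 @ w) y" by blast
    obtain t where t: "0 \<le> t" "t \<le> l" "word_comp \<alpha> \<beta> w y = frac (p+t)" using p[OF y(1)] by blast
    have "x = word_comp \<alpha> \<beta> (replicate n 1) (frac (p + t))" using y t by (simp only: W_append comp_def)
    also have "\<dots> = frac (p + t + real n * \<alpha>)" by (rule W_rep)
    also have "\<dots> = frac (a + (h + t))"
    proof (rule frac_cong)
      have eq: "p + t + real n * \<alpha> - (a + (h + t)) = (p - a + real n * \<alpha>) - h" by simp
      show "p + t + real n * \<alpha> - (a + (h + t)) \<in> \<int>" unfolding eq by (rule hZ)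
    qed
    finally have "x = frac (a + (h + t))" .
    moreover have "0 < h" "h < L - l" using n unfolding h_def by blast+
    then have "0 < h + t" "h + t < L" using t by linarith+
    ultimately show "x \<in> open_arc a L" unfolding open_arc_def by blast
    qed
  qed
qed

end
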